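(* Let $(X,\mathcal{A})$ be a measurable space, $f,g:X\to[0,1]$ two comonotone measurable functions, and $S$ a continuous t-conorm. Then for every monotone measure $m$ on $(X,\mathcal{A})$ with $m(X)=1$, \[ \mathbf{I}_S\big(m,S(f,g)\big)\ \le\ S\big(\mathbf{I}_S(m,f),\mathbf{I}_S(m,g)\big), \] where $S(f,g)(x)=S(f(x),g(x))$ for $x\in X$.
   Context: A monotone measure on $(X,\mathcal{A})$ is $m:\mathcal{A}\to[0,\infty]$ with $m(\emptyset)=0$, $m(X)>0$, $m(A)\le m(B)$ for $A\subseteq B$. A t-conorm is an associative, commutative map $S:[0,1]^2\to[0,1]$, non-decreasing in both components, with neutral element $0$. The semiconormed integral is $\mathbf{I}_S(m,f)=\inf\{S(t,m(\{f>t\})) : t\in(0,1]\}$. $f,g$ are comonotone if $(f(x)-f(y))(g(x)-g(y))\ge0$ for all $x,y\in X$. *)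

theory Defs
  imports "HOL-Analysis.Analysis"
begin

definition monotone_measure :: "'a measure \<Rightarrow> ('a set \<Rightarrow> ennreal) \<Rightarrow> bool" where
  "monotone_measure M m \<longleftrightarrow>
     m {} = 0 \<and> m (space M) > 0 \<and>
     (\<forall>A\<in>sets M. \<forall>B\<in>sets M. A \<subseteq> B \<longrightarrow> m A \<le> m B)"

text \<open>t-conorm on [0,1]; values of S outside [0,1]^2 are irrelevant.\<close>
definition t_conorm :: "(real \<Rightarrow> real \<Rightarrow> real) \<Rightarrow> bool" where
  "t_conorm S \<longleftrightarrow>
     (\<forall>x\<in>{0..1}. \<forall>y\<in>{0..1}. S x y \<in> {0..1}) \<and>
     (\<forall>x\<in>{0..1}. \<forall>y\<in>{0..1}. \<forall>z\<in>{0..1}. S (S x y) z = S x (S y z)) \<and>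
     (\<forall>x\<in>{0..1}. \<forall>y\<in>{0..1}. S x y = S y x) \<and>
     (\<forall>x\<in>{0..1}. \<forall>x'\<in>{0..1}. \<forall>y\<in>{0..1}. \<forall>y'\<in>{0..1}.
        x \<le> x' \<longrightarrow> y \<le> y' \<longrightarrow> S x y \<le> S x' y') \<and>
     (\<forall>x\<in>{0..1}. S x 0 = x)"

definition continuous_t_conorm :: "(real \<Rightarrow> real \<Rightarrow> real) \<Rightarrow> bool" where
  "continuous_t_conorm S \<longleftrightarrow> t_conorm S \<and>
     continuous_on ({0..1} \<times> {0..1}) (\<lambda>(x, y). S x y)"

text \<open>Semiconormed integral I_S(m,f) = inf {S(t, m{f>t}) | t \<in> (0,1]}.
  It is used only for measures with m(X) = 1, where all relevant values of m lie in [0,1];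
  enn2real converts them to reals.\<close>
definition semiconormed_integral ::
  "(real \<Rightarrow> real \<Rightarrow> real) \<Rightarrow> 'a measure \<Rightarrow> ('a set \<Rightarrow> ennreal) \<Rightarrow> ('a \<Rightarrow> real) \<Rightarrow> real" where
  "semiconormed_integral S M m f =
     (INF t\<in>{0<..1}. S t (enn2real (m {x\<in>space M. f x > t})))"

definition comonotone :: "'a set \<Rightarrow> ('a \<Rightarrow> real) \<Rightarrow> ('a \<Rightarrow> real) \<Rightarrow> bool" where
  "comonotone X f g \<longleftrightarrow> (\<forall>x\<in>X. \<forall>y\<in>X. (f x - f y) * (g x - g y) \<ge> 0)"

end

theory Submission
  imports Defs
begin

lemma tc_rearr:
  assumes "t_conorm S" and "t \<in> {0..1}" "s \<in> {0..1}" "p \<in> {0..1}" "q \<in> {0..1}"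
  shows "S (S t s) (S p q) = S (S t p) (S s q)"
proof -
  have cl: "\<And>x y. x \<in> {0..1} \<Longrightarrow> y \<in> {0..1} \<Longrightarrow> S x y \<in> {0..1}"
   and as: "\<And>x y z. x \<in> {0..1} \<Longrightarrow> y \<in> {0..1} \<Longrightarrow> z \<in> {0..1} \<Longrightarrow> S (S x y) z = S x (S y z)"
   and cm: "\<And>x y. x \<in> {0..1} \<Longrightarrow> y \<in> {0..1} \<Longrightarrow> S x y = S y x"
    using assms(1) unfolding t_conorm_def by blast+
  have "S (S t s) (S p q) = S t (S s (S p q))" using as cl assms by auto
  also have "\<dots> = S t (S (S s p) q)" using as cl assms by auto
  also have "\<dots> = S t (S (S p s) q)" using cm assms by auto
  also have "\<dots> = S t (S p (S s q))" using as cl assms by auto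
  also have "\<dots> = S (S t p) (S s q)" using as cl assms by auto
  finally show ?thesis .
qed

theorem corollary4p10:
  fixes M :: "'a measure" and f g :: "'a \<Rightarrow> real" and S :: "real \<Rightarrow> real \<Rightarrow> real"
    and m :: "'a set \<Rightarrow> ennreal"
  assumes "f \<in> borel_measurable M" and "g \<in> borel_measurable M"
    and "\<forall>x\<in>space M. f x \<in> {0..1}" and "\<forall>x\<in>space M. g x \<in> {0..1}"
    and "comonotone (space M) f g"
    and "continuous_t_conorm S"
    and "monotone_measure M m" and "m (space M) = 1"
  shows "semiconormed_integral S M m (\<lambda>x. S (f x) (g x))
         \<le> S (semiconormed_integral S M m f) (semiconormed_integral S M m g)"
proof -
  have tc: "t_conorm S" and cont: "continuous_on ({0..1} \<times> {0..1}) (\<lambda>(x, y). S x y)"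
    using assms(6) unfolding continuous_t_conorm_def by auto
  have cl: "\<And>x y. x \<in> {0..1} \<Longrightarrow> y \<in> {0..1} \<Longrightarrow> S x y \<in> {0..1}"
   and cm: "\<And>x y. x \<in> {0..1} \<Longrightarrow> y \<in> {0..1} \<Longrightarrow> S x y = S y x"
   and mo: "\<And>x x' y y'. x \<in> {0..1} \<Longrightarrow> x' \<in> {0..1} \<Longrightarrow> y \<in> {0..1} \<Longrightarrow> y' \<in> {0..1}
              \<Longrightarrow> x \<le> x' \<Longrightarrow> y \<le> y' \<Longrightarrow> S x y \<le> S x' y'"
   and ne: "\<And>x. x \<in> {0..1} \<Longrightarrow> S x 0 = x"
    using tc unfolding t_conorm_def by blast+
  have mm: "\<And>A B. A \<in> sets M \<Longrightarrow> B \<in> sets M \<Longrightarrow> A \<subseteq> B \<Longrightarrow> m A \<le> m B"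
    using assms(7) unfolding monotone_measure_def by blast
  have mle: "\<And>A. A \<in> sets M \<Longrightarrow> m A < top"
  proof -
    fix A assume A: "A \<in> sets M"
    have "m A \<le> 1" using mm[OF A sets.top sets.sets_into_space[OF A]] assms(8) by simp
    then show "m A < top" using order.strict_trans1 by fastforce
  qed
  have mfin: "\<And>A. A \<in> sets M \<Longrightarrow> enn2real (m A) \<in> {0..1}"
  proof -
    fix A assume A: "A \<in> sets M"
    have "m A \<le> 1" using mm[OF A sets.top sets.sets_into_space[OF A]] assms(8) by simp
    then show "enn2real (m A) \<in> {0..1}"
      by (simp add: enn2real_leI)
  qed
  define h where "h = (\<lambda>x. S (f x) (g x))"
  have hr: "\<forall>x\<in>space M. h x \<in> {0..1}" using cl assms(3,4) unfolding h_def by auto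
  define clamp :: "real \<Rightarrow> real" where "clamp = (\<lambda>x. max 0 (min 1 x))"
  have clc: "continuous_on UNIV clamp" unfolding clamp_def by (intro continuous_intros)
  have "continuous_on UNIV ((\<lambda>(x, y). S x y) \<circ> (\<lambda>z. (clamp (fst z), clamp (snd z))))"
    apply (rule continuous_on_compose)
     apply (intro continuous_on_Pair continuous_on_compose2[OF clc continuous_on_fst]
         continuous_on_compose2[OF clc continuous_on_snd]; simp)
    apply (rule continuous_on_subset[OF cont])
    by (auto simp: clamp_def)
  hence "(\<lambda>x. ((\<lambda>(x, y). S x y) \<circ> (\<lambda>z. (clamp (fst z), clamp (snd z)))) (f x, g x)) \<in> borel_measurable M"
    by (rule borel_measurable_continuous_on) (rule borel_measurable_Pair[OF assms(1,2)])
  hence "(\<lambda>x. S (clamp (f x)) (clamp (g x))) \<in> borel_measurable M" by (simp add: o_def)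
  hence hm: "h \<in> borel_measurable M"
    apply (rule measurable_cong[THEN iffD1, rotated])
    using assms(3,4) by (auto simp: h_def clamp_def)
  define P where "P t = enn2real (m {x\<in>space M. f x > t})" for t
  define Q where "Q t = enn2real (m {x\<in>space M. g x > t})" for t
  define R where "R t = enn2real (m {x\<in>space M. h x > t})" for t
  have Pr: "P t \<in> {0..1}" for t unfolding P_def using assms(1) by (intro mfin) measurable
  have Qr: "Q t \<in> {0..1}" for t unfolding Q_def using assms(2) by (intro mfin) measurable
  have Rr: "R t \<in> {0..1}" for t unfolding R_def using hm by (intro mfin) measurable
  define a where "a = (INF t\<in>{0<..1}. S t (P t))"
  define b where "b = (INF t\<in>{0<..1}. S t (Q t))"
  define I where "I = (INF t\<in>{0<..1}. S t (R t))"
  have bdA: "bdd_below ((\<lambda>t. S t (P t)) ` {0<..1})"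
    using cl Pr by (intro bdd_belowI[of _ 0]) fastforce
  have bdB: "bdd_below ((\<lambda>t. S t (Q t)) ` {0<..1})"
    using cl Qr by (intro bdd_belowI[of _ 0]) fastforce
  have bdI: "bdd_below ((\<lambda>t. S t (R t)) ` {0<..1})"
    using cl Rr by (intro bdd_belowI[of _ 0]) fastforce
  have a01: "a \<in> {0..1}" unfolding atLeastAtMost_iff
  proof
    show "0 \<le> a" unfolding a_def using cl Pr by (intro cINF_greatest) fastforce+
    have "a \<le> S 1 (P 1)" unfolding a_def by (rule cINF_lower[OF bdA]) auto
    also have "\<dots> \<le> 1" using cl Pr by fastforce
    finally show "a \<le> 1" .
  qed
  have b01: "b \<in> {0..1}" unfolding atLeastAtMost_iff
  proof
    show "0 \<le> b" unfolding b_def using cl Qr by (intro cINF_greatest) fastforce+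
    have "b \<le> S 1 (Q 1)" unfolding b_def by (rule cINF_lower[OF bdB]) auto
    also have "\<dots> \<le> 1" using cl Qr by fastforce
    finally show "b \<le> 1" .
  qed
  have key: "I \<le> S (S t (P t)) (S s (Q s))" if t: "t \<in> {0<..1}" and s: "s \<in> {0<..1}" for t s
  proof -
    have t1: "t \<in> {0..1}" and s1: "s \<in> {0..1}" using t s by auto
    define u where "u = S t s"
    have u1: "u \<in> {0..1}" unfolding u_def using cl t1 s1 by auto
    have "t \<le> u" unfolding u_def using mo[OF t1 t1 _ s1, of 0] ne[OF t1] s by auto
    hence u0: "u \<in> {0<..1}" using t u1 by auto
    let ?F = "{x\<in>space M. f x > t}" and ?G = "{x\<in>space M. g x > s}"
      and ?H = "{x\<in>space M. h x > u}"
    have Fm: "?F \<in> sets M" using assms(1) by measurable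
    have Gm: "?G \<in> sets M" using assms(2) by measurable
    have Hm: "?H \<in> sets M" using hm by measurable
    have sub: "?H \<subseteq> ?F \<union> ?G"
    proof
      fix x assume x: "x \<in> ?H"
      show "x \<in> ?F \<union> ?G"
      proof (rule ccontr)
        assume "x \<notin> ?F \<union> ?G"
        hence "f x \<le> t" "g x \<le> s" using x by auto
        hence "h x \<le> u" unfolding h_def u_def using x assms(3,4) t1 s1 by (intro mo) auto
        thus False using x by auto
      qed
    qed
    have nest: "?F \<subseteq> ?G \<or> ?G \<subseteq> ?F"
    proof (rule ccontr)
      assume "\<not> ?thesis"
      then obtain x y where x: "x \<in> ?F" "x \<notin> ?G" and y: "y \<in> ?G" "y \<notin> ?F" by blast
      have "(f x - f y) * (g x - g y) \<ge> 0" using assms(5) x y unfolding comonotone_def by auto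
      moreover have "f x - f y > 0" "g x - g y < 0" using x y by auto
      ultimately show False by (metis mult_pos_neg not_le)
    qed
    have RPQ: "R u \<le> max (P t) (Q s)"
    proof (cases "?F \<subseteq> ?G")
      case True
      hence "?H \<subseteq> ?G" using sub by auto
      hence "m ?H \<le> m ?G" using mm Hm Gm by auto
      hence "R u \<le> Q s" unfolding R_def Q_def
        by (intro enn2real_mono) (use mle[OF Gm] in auto)
      then show ?thesis by simp
    next
      case False
      hence "?H \<subseteq> ?F" using sub nest by auto
      hence "m ?H \<le> m ?F" using mm Hm Fm by auto
      hence "R u \<le> P t" unfolding R_def P_def
        by (intro enn2real_mono) (use mle[OF Fm] in auto)
      then show ?thesis by simp
    qed
    have "max (P t) (Q s) \<le> S (P t) (Q s)"
    proof -
      have "P t \<le> S (P t) (Q s)" using mo[OF Pr Pr _ Qr, of 0] ne[OF Pr] Qr by auto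
      moreover have "Q s \<le> S (P t) (Q s)"
        using mo[OF Qr Qr _ Pr, of 0] ne[OF Qr] Pr cm[OF Pr Qr] by auto
      ultimately show ?thesis by simp
    qed
    hence RS: "R u \<le> S (P t) (Q s)" using RPQ by (meson order_trans)
    have "I \<le> S u (R u)" unfolding I_def by (rule cINF_lower[OF bdI u0])
    also have "\<dots> \<le> S u (S (P t) (Q s))" using u1 Rr RS cl Pr Qr by (intro mo) auto
    also have "\<dots> = S (S t (P t)) (S s (Q s))"
      unfolding u_def by (rule tc_rearr[OF tc t1 s1 Pr Qr])
    finally show ?thesis .
  qed
  show ?thesis
  proof (rule ccontr)
    assume "\<not> ?thesis"
    hence lt: "S a b < I" unfolding I_def a_def b_def h_def P_def Q_def R_def
        semiconormed_integral_def by simp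
    define e where "e = I - S a b"
    have e: "e > 0" using lt unfolding e_def by simp
    obtain d where d: "d > 0" and dd: "\<And>z. z \<in> {0..1} \<times> {0..1} \<Longrightarrow> dist z (a, b) < d
        \<Longrightarrow> dist ((\<lambda>(x, y). S x y) z) ((\<lambda>(x, y). S x y) (a, b)) < e"
      using cont a01 b01 e unfolding continuous_on_iff by fastforce
    have "a < a + d/2" using d by simp
    hence "\<exists>t\<in>{0<..1}. S t (P t) < a + d/2"
      unfolding a_def by (subst (asm) cINF_less_iff[OF _ bdA]) auto
    then obtain t where t: "t \<in> {0<..1}" and ta: "S t (P t) < a + d/2" by blast
    have "b < b + d/2" using d by simp
    hence "\<exists>s\<in>{0<..1}. S s (Q s) < b + d/2"
      unfolding b_def by (subst (asm) cINF_less_iff[OF _ bdB]) auto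
    then obtain s where s: "s \<in> {0<..1}" and sb: "S s (Q s) < b + d/2" by blast
    define x where "x = S t (P t)"
    define y where "y = S s (Q s)"
    have x1: "x \<in> {0..1}" unfolding x_def using t Pr cl by auto
    have y1: "y \<in> {0..1}" unfolding y_def using s Qr cl by auto
    have ax: "a \<le> x" unfolding a_def x_def by (rule cINF_lower[OF bdA t])
    have by': "b \<le> y" unfolding b_def y_def by (rule cINF_lower[OF bdB s])
    have "dist (x, y) (a, b) \<le> \<bar>dist x a\<bar> + \<bar>dist y b\<bar>"
      unfolding dist_Pair_Pair by (rule sqrt_sum_squares_le_sum_abs)
    also have "\<dots> < d" using ax by' ta sb unfolding x_def y_def dist_real_def by auto
    finally have "dist (S x y) (S a b) < e" using dd[of "(x, y)"] x1 y1 by auto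
    hence "S x y < I" unfolding e_def dist_real_def by auto
    moreover have "I \<le> S x y" unfolding x_def y_def by (rule key[OF t s])
    ultimately show False by simp
  qed
qed

end
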